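(* Let $X$ be a Banach space with an extended $\lambda$-approximative basis $(P_\alpha)_{\alpha\in\mathscr{D}}$. Assume that $K$ is a separable subset of $X$ and $(y_n)$ is a semi-normalized weakly null sequence in $K$. Then there exist an increasing sequence $(\alpha_{m_i})_{i\ge0}$ in $\mathscr{D}$ and a basic subsequence $(x_{n_i})$ of $(y_n)$ such that (1) $\lim_{i\to\infty}\big\|P_{\alpha_{m_i}}\big(\frac1N\sum_{k=1}^N x_{n_{i+k}}\big)\big\|=0$ for all $N\in\mathbb{N}$; (2) $\lim_{i\to\infty}\|x_{n_i}-P_{\alpha_{m_i}}(x_{n_i})\|=0$; (3) $\lim_{i\to\infty}\|x-P_{\alpha_{m_i}}(x)\|=0$ for all $x\in K$.
   Context: $X$ has an extended $\lambda$-approximative basis ($\lambda\ge1$) if there is a net $(P_\alpha)_{\alpha\in\mathscr{D}}$ of finite-rank bounded linear operators on $X$ with $x=\lim_\alpha P_\alpha(x)$ for all $x\in X$ and $\sup_\alpha\|P_\alpha\|\le\lambda$. A sequence is semi-normalized if $0<\inf_n\|y_n\|\le\sup_n\|y_n\|<\infty$; it is basic if it is a Schauder basis of its closed linear span. *)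

theory Defs
  imports "HOL-Analysis.Analysis"
begin

definition directed_set :: "'d set \<Rightarrow> ('d \<Rightarrow> 'd \<Rightarrow> bool) \<Rightarrow> bool" where
  "directed_set D le \<longleftrightarrow> D \<noteq> {} \<and>
     (\<forall>a\<in>D. le a a) \<and>
     (\<forall>a\<in>D. \<forall>b\<in>D. \<forall>c\<in>D. le a b \<longrightarrow> le b c \<longrightarrow> le a c) \<and>
     (\<forall>a\<in>D. \<forall>b\<in>D. \<exists>c\<in>D. le a c \<and> le b c)"

definition net_tendsto :: "'d set \<Rightarrow> ('d \<Rightarrow> 'd \<Rightarrow> bool) \<Rightarrow> ('d \<Rightarrow> 'a::metric_space) \<Rightarrow> 'a \<Rightarrow> bool" where
  "net_tendsto D le f l \<longleftrightarrow>
     (\<forall>e>0. \<exists>a0\<in>D. \<forall>a\<in>D. le a0 a \<longrightarrow> dist (f a) l < e)"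

definition finite_rank :: "('a::real_vector \<Rightarrow> 'b::real_vector) \<Rightarrow> bool" where
  "finite_rank T \<longleftrightarrow> (\<exists>B. finite B \<and> range T \<subseteq> span B)"

definition ext_approx_basis ::
  "real \<Rightarrow> 'd set \<Rightarrow> ('d \<Rightarrow> 'd \<Rightarrow> bool) \<Rightarrow> ('d \<Rightarrow> 'a::real_normed_vector \<Rightarrow> 'a) \<Rightarrow> bool" where
  "ext_approx_basis lam D le P \<longleftrightarrow>
     lam \<ge> 1 \<and> directed_set D le \<and>
     (\<forall>a\<in>D. bounded_linear (P a) \<and> finite_rank (P a) \<and> onorm (P a) \<le> lam) \<and>
     (\<forall>x. net_tendsto D le (\<lambda>a. P a x) x)"

definition separable_set :: "'a::metric_space set \<Rightarrow> bool" where
  "separable_set K \<longleftrightarrow> (\<exists>C. countable C \<and> C \<subseteq> K \<and> K \<subseteq> closure C)"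

definition semi_normalized :: "(nat \<Rightarrow> 'a::real_normed_vector) \<Rightarrow> bool" where
  "semi_normalized y \<longleftrightarrow> (\<exists>a b. 0 < a \<and> (\<forall>n. a \<le> norm (y n) \<and> norm (y n) \<le> b))"

definition weakly_null :: "(nat \<Rightarrow> 'a::real_normed_vector) \<Rightarrow> bool" where
  "weakly_null y \<longleftrightarrow> (\<forall>f::'a \<Rightarrow> real. bounded_linear f \<longrightarrow> (\<lambda>n. f (y n)) \<longlonglongrightarrow> 0)"

definition basic_seq :: "(nat \<Rightarrow> 'a::real_normed_vector) \<Rightarrow> bool" where
  "basic_seq x \<longleftrightarrow> (\<forall>z\<in>closure (span (range x)).
      \<exists>!c::nat \<Rightarrow> real. (\<lambda>N. \<Sum>i<N. c i *\<^sub>R x i) \<longlonglongrightarrow> z)"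

end

theory Submission
  imports Defs
begin

lemma coord_bound:
  fixes b v :: "'a::real_normed_vector"
  assumes "v - t *\<^sub>R b \<in> span B"
  shows "\<bar>t\<bar> * infdist b (span B) \<le> norm v"
proof (cases "t = 0")
  case True then show ?thesis by simp
next
  case False
  have "b - (1/t) *\<^sub>R v = - (1/t) *\<^sub>R (v - t *\<^sub>R b)"
    using False by (simp add: algebra_simps)
  then have mem: "b - (1/t) *\<^sub>R v \<in> span B"
    using assms by (metis span_scale)
  have "infdist b (span B) \<le> dist b (b - (1/t) *\<^sub>R v)" by (rule infdist_le[OF mem])
  also have "\<dots> = norm v / \<bar>t\<bar>" by (simp add: dist_norm divide_inverse mult.commute)
  finally show ?thesis using False by (simp add: field_simps)
qed

lemma closed_span_finite:
  fixes B :: "'a::real_normed_vector set"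
  assumes "finite B"
  shows "closed (span B)"
  using assms
proof (induction B rule: finite_induct)
  case empty
  then show ?case by simp
next
  case (insert b B)
  show ?case
  proof (cases "b \<in> span B")
    case True
    then show ?thesis using insert by (simp add: span_redundant)
  next
    case False
    define d where "d = infdist b (span B)"
    have dpos: "d > 0" unfolding d_def
      by (rule infdist_pos_not_in_closed[OF insert.IH _ False]) (use span_zero[of B] in blast)
    show ?thesis
    proof (rule closed_sequential_limits[THEN iffD2], intro allI impI, elim conjE)
      fix v :: "nat \<Rightarrow> 'a" and l
      assume vin: "\<forall>n. v n \<in> span (insert b B)" and lim: "v \<longlonglongrightarrow> l"
      have "\<forall>n. \<exists>t. v n - t *\<^sub>R b \<in> span B" using vin by (simp add: span_breakdown_eq)
      then obtain t where t: "\<And>n. v n - t n *\<^sub>R b \<in> span B" by metis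
      have diff: "\<bar>t m - t n\<bar> * d \<le> norm (v m - v n)" for m n
      proof -
        have "(v m - v n) - (t m - t n) *\<^sub>R b = (v m - t m *\<^sub>R b) - (v n - t n *\<^sub>R b)"
          by (simp add: algebra_simps)
        also have "\<dots> \<in> span B" using t by (simp add: span_diff)
        finally show ?thesis unfolding d_def by (rule coord_bound)
      qed
      have "Cauchy v" using lim by (rule LIMSEQ_imp_Cauchy)
      have "Cauchy t"
      proof (rule CauchyI)
        fix e :: real assume "e > 0"
        then have "e * d > 0" using dpos by simp
        then obtain M where M: "\<forall>m\<ge>M. \<forall>n\<ge>M. norm (v m - v n) < e * d"
          using CauchyD[OF \<open>Cauchy v\<close>] by blast
        show "\<exists>M. \<forall>m\<ge>M. \<forall>n\<ge>M. norm (t m - t n) < e"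
        proof (intro exI allI impI)
          fix m n assume "m \<ge> M" "n \<ge> M"
          then have "\<bar>t m - t n\<bar> * d < e * d" using diff[of m n] M by fastforce
          then show "norm (t m - t n) < e" using dpos by simp
        qed
      qed
      then obtain s where ts: "t \<longlonglongrightarrow> s" using Cauchy_convergent_iff convergent_def by blast
      have "(\<lambda>n. v n - t n *\<^sub>R b) \<longlonglongrightarrow> l - s *\<^sub>R b"
        by (intro tendsto_intros lim ts)
      have "l - s *\<^sub>R b \<in> span B"
        by (rule closed_sequentially[OF insert.IH _ \<open>(\<lambda>n. v n - t n *\<^sub>R b) \<longlonglongrightarrow> l - s *\<^sub>R b\<close>]) (use t in blast)
      then show "l \<in> span (insert b B)" by (auto simp: span_breakdown_eq)
    qed
  qed
qed

lemma fin_rank_weak: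
  fixes y :: "nat \<Rightarrow> 'a::real_normed_vector" and B :: "'b::real_normed_vector set"
  assumes "finite B" and wn: "weakly_null y"
  shows "\<forall>T::'a\<Rightarrow>'b. bounded_linear T \<and> range T \<subseteq> span B \<longrightarrow> (\<lambda>n. T (y n)) \<longlonglongrightarrow> 0"
  using assms(1)
proof (induction B rule: finite_induct)
  case empty
  show ?case
  proof (intro allI impI)
    fix T :: "'a \<Rightarrow> 'b" assume "bounded_linear T \<and> range T \<subseteq> span {}"
    then have "\<forall>x. T x = 0" by auto
    then show "(\<lambda>n. T (y n)) \<longlonglongrightarrow> 0" by simp
  qed
next
  case (insert b B)
  show ?case
  proof (cases "b \<in> span B")
    case True
    then show ?thesis using insert by (simp add: span_redundant)
  next
    case False
    define d where "d = infdist b (span B)"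
    have dpos: "d > 0" unfolding d_def
      by (rule infdist_pos_not_in_closed[OF closed_span_finite[OF insert.hyps(1)] _ False]) (use span_zero[of B] in blast)
    show ?thesis
    proof (intro allI impI, elim conjE)
      fix T :: "'a \<Rightarrow> 'b" assume bl: "bounded_linear T" and rg: "range T \<subseteq> span (insert b B)"
      have ex: "\<exists>t. T x - t *\<^sub>R b \<in> span B" for x
      proof -
        have "T x \<in> span (insert b B)" using rg by blast
        then show ?thesis by (simp add: span_breakdown_eq)
      qed
      have uniq: "t = t'" if "T x - t *\<^sub>R b \<in> span B" "T x - t' *\<^sub>R b \<in> span B" for x t t'
      proof (rule ccontr)
        assume ne: "t \<noteq> t'"
        have "(T x - t' *\<^sub>R b) - (T x - t *\<^sub>R b) = (t - t') *\<^sub>R b" by (simp add: algebra_simps)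
        moreover have "(T x - t' *\<^sub>R b) - (T x - t *\<^sub>R b) \<in> span B"
          using span_diff[OF that(2) that(1)] .
        ultimately have "(t - t') *\<^sub>R b \<in> span B" by simp
        then have "(1/(t - t')) *\<^sub>R ((t - t') *\<^sub>R b) \<in> span B" by (rule span_scale)
        then show False using ne False by simp
      qed
      define phi where "phi x = (THE t. T x - t *\<^sub>R b \<in> span B)" for x
      have phi: "T x - phi x *\<^sub>R b \<in> span B" for x
      proof -
        have "\<exists>!t. T x - t *\<^sub>R b \<in> span B" using ex[of x] uniq[of x] by blast
        then show ?thesis unfolding phi_def by (rule theI')
      qed
      have phi_eq: "phi x = t" if "T x - t *\<^sub>R b \<in> span B" for x t
        using uniq[OF phi that] .
      interpret T: bounded_linear T by fact
      obtain KT where KT: "\<And>x. norm (T x) \<le> norm x * KT" using T.bounded by blast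
      have "bounded_linear phi"
      proof (rule bounded_linear_intro)
        fix x x'
        have "T (x + x') - (phi x + phi x') *\<^sub>R b = (T x - phi x *\<^sub>R b) + (T x' - phi x' *\<^sub>R b)"
          by (simp add: T.add algebra_simps)
        also have "\<dots> \<in> span B" using phi by (simp add: span_add)
        finally show "phi (x + x') = phi x + phi x'" by (rule phi_eq)
      next
        fix r x
        have "T (r *\<^sub>R x) - (r * phi x) *\<^sub>R b = r *\<^sub>R (T x - phi x *\<^sub>R b)"
          by (simp add: T.scaleR algebra_simps)
        also have "\<dots> \<in> span B" using phi by (simp add: span_scale)
        finally show "phi (r *\<^sub>R x) = r *\<^sub>R phi x" by (simp add: phi_eq)
      next
        fix x
        have "\<bar>phi x\<bar> * d \<le> norm (T x)" unfolding d_def by (rule coord_bound[OF phi])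
        also have "\<dots> \<le> norm x * KT" by (rule KT)
        finally have "\<bar>phi x\<bar> * d \<le> norm x * KT" .
        then show "norm (phi x) \<le> norm x * (KT / d)" using dpos by (simp add: field_simps)
      qed
      then have p0: "(\<lambda>n. phi (y n)) \<longlonglongrightarrow> 0" using wn unfolding weakly_null_def by blast
      define T' where "T' x = T x - phi x *\<^sub>R b" for x
      have "bounded_linear T'" unfolding T'_def
        by (intro bounded_linear_sub bl bounded_linear_compose[OF bounded_linear_scaleR_left \<open>bounded_linear phi\<close>])
      moreover have "range T' \<subseteq> span B" using phi by (auto simp: T'_def)
      ultimately have t0: "(\<lambda>n. T' (y n)) \<longlonglongrightarrow> 0" using insert.IH by blast
      have "(\<lambda>n. T' (y n) + phi (y n) *\<^sub>R b) \<longlonglongrightarrow> 0 + 0 *\<^sub>R b"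
        by (intro tendsto_intros t0 p0)
      then show "(\<lambda>n. T (y n)) \<longlonglongrightarrow> 0" by (simp add: T'_def)
    qed
  qed
qed

lemma geo_sum: "(\<Sum>i<n. 1 / (2::real) ^ Suc i) = 1 - 1 / 2 ^ n"
  by (induction n) (auto simp: field_simps)

lemma grun:
  fixes x :: "nat \<Rightarrow> 'a::real_normed_vector" and Q :: "nat \<Rightarrow> 'a \<Rightarrow> 'a"
  assumes bl: "\<And>i. bounded_linear (Q i)" and on: "\<And>i. onorm (Q i) \<le> lam"
    and ax: "\<And>i. a \<le> norm (x i)" and apos: "a > 0"
    and F2: "\<And>i j. j < i \<Longrightarrow> norm (Q j (x i)) < (a/4) / 2 ^ Suc i"
    and F3: "\<And>i j. j \<le> i \<Longrightarrow> norm (x j - Q i (x j)) < (a/4) / 2 ^ Suc i"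
    and mn: "m \<le> n"
  shows "norm (\<Sum>i<m. c i *\<^sub>R x i) \<le> 2 * lam * norm (\<Sum>i<n. c i *\<^sub>R x i)"
proof -
  define S where "S k = (\<Sum>i<k. c i *\<^sub>R x i)" for k
  define z where "z = S n"
  define M where "M = Max ((\<lambda>k. norm (S k)) ` {..n})"
  define del where "del i = (a/4) / (2::real) ^ Suc i" for i
  have Mge: "norm (S k) \<le> M" if "k \<le> n" for k
    unfolding M_def using that by (intro Max_ge) auto
  obtain k0 where k0: "k0 \<le> n" "M = norm (S k0)"
  proof -
    have "M \<in> (\<lambda>k. norm (S k)) ` {..n}" unfolding M_def by (intro Max_in) auto
    then show ?thesis using that by auto
  qed
  have M0: "M \<ge> 0" using k0 by simp
  have lam0: "lam \<ge> 0" using onorm_pos_le[OF bl[of 0]] on[of 0] by linarith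
  have cb: "\<bar>c i\<bar> \<le> 2 * M / a" if "i < n" for i
  proof -
    have "\<bar>c i\<bar> * a \<le> \<bar>c i\<bar> * norm (x i)" using ax[of i] by (simp add: mult_left_mono)
    also have "\<dots> = norm (S (Suc i) - S i)" by (simp add: S_def)
    also have "\<dots> \<le> norm (S (Suc i)) + norm (S i)" by (rule norm_triangle_ineq4)
    also have "\<dots> \<le> M + M" using Mge[of "Suc i"] Mge[of i] that by simp
    finally show ?thesis using apos by (simp add: field_simps)
  qed
  have geo: "(\<Sum>i<n. del i) \<le> a / 4"
  proof -
    have "(\<Sum>i<n. del i) = (a/4) * (\<Sum>i<n. 1 / (2::real) ^ Suc i)"
      by (simp add: del_def sum_distrib_left)
    also have "\<dots> \<le> (a/4) * 1" unfolding geo_sum using apos by (intro mult_left_mono) auto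
    finally show ?thesis by simp
  qed
  have err: "(\<Sum>i<n. \<bar>c i\<bar> * del i) \<le> M / 2"
  proof -
    have "(\<Sum>i<n. \<bar>c i\<bar> * del i) \<le> (\<Sum>i<n. (2 * M / a) * del i)"
      by (intro sum_mono mult_right_mono cb) (use apos in \<open>auto simp: del_def\<close>)
    also have "\<dots> = (2 * M / a) * (\<Sum>i<n. del i)" by (simp add: sum_distrib_left)
    also have "\<dots> \<le> (2 * M / a) * (a / 4)" using geo M0 apos by (intro mult_left_mono) auto
    also have "\<dots> = M / 2" using apos by simp
    finally show ?thesis .
  qed
  have delmono: "del p \<le> del i" if "i \<le> p" for i p
    unfolding del_def using apos that by (intro divide_left_mono power_increasing) auto
  have key: "norm (S m') \<le> lam * norm z + M / 2" if "m' \<le> n" for m'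
  proof (cases m')
    case 0
    then show ?thesis using lam0 M0 by (simp add: S_def)
  next
    case (Suc p)
    interpret Qp: bounded_linear "Q p" by (rule bl)
    have Qz: "Q p z = (\<Sum>i<n. c i *\<^sub>R Q p (x i))"
      by (simp add: z_def S_def Qp.sum Qp.scaleR)
    have Sm: "S m' = (\<Sum>i<n. if i < m' then c i *\<^sub>R x i else 0)"
    proof -
      have "(\<Sum>i<n. if i < m' then c i *\<^sub>R x i else 0) = (\<Sum>i\<in>{..<n} \<inter> {..<m'}. c i *\<^sub>R x i)"
        by (simp add: sum.inter_restrict[of "{..<n}" _ "{..<m'}"])
      also have "{..<n} \<inter> {..<m'} = {..<m'}" using that by auto
      finally show ?thesis by (simp add: S_def)
    qed
    have "S m' - Q p z = (\<Sum>i<n. (if i < m' then c i *\<^sub>R x i else 0) - c i *\<^sub>R Q p (x i))"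
      by (simp add: Sm Qz sum_subtractf)
    also have "\<dots> = (\<Sum>i<n. if i < m' then c i *\<^sub>R (x i - Q p (x i)) else - (c i *\<^sub>R Q p (x i)))"
      by (intro sum.cong) (auto simp: algebra_simps)
    finally have eq: "S m' - Q p z = \<dots>" .
    have "norm (S m' - Q p z) \<le> (\<Sum>i<n. norm (if i < m' then c i *\<^sub>R (x i - Q p (x i)) else - (c i *\<^sub>R Q p (x i))))"
      unfolding eq by (rule norm_sum)
    also have "\<dots> \<le> (\<Sum>i<n. \<bar>c i\<bar> * del i)"
    proof (intro sum_mono)
      fix i assume "i \<in> {..<n}"
      show "norm (if i < m' then c i *\<^sub>R (x i - Q p (x i)) else - (c i *\<^sub>R Q p (x i))) \<le> \<bar>c i\<bar> * del i"
      proof (cases "i < m'")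
        case True
        then have "i \<le> p" using Suc by simp
        then have "norm (x i - Q p (x i)) \<le> del i"
          using F3[of i p] delmono[of i p] unfolding del_def by linarith
        then show ?thesis using True by (simp add: mult_left_mono)
      next
        case False
        then have "p < i" using Suc by simp
        then have "norm (Q p (x i)) \<le> del i" using F2[of p i] unfolding del_def by linarith
        then show ?thesis using False by (simp add: mult_left_mono)
      qed
    qed
    also have "\<dots> \<le> M / 2" by (rule err)
    finally have e1: "norm (S m' - Q p z) \<le> M / 2" .
    have e2: "norm (Q p z) \<le> lam * norm z"
      using onorm[OF bl[of p], of z] on[of p] by (meson mult_right_mono norm_ge_zero order_trans)
    have "norm (S m') \<le> norm (Q p z) + norm (S m' - Q p z)"
      by (metis add.commute diff_add_cancel norm_triangle_ineq)
    then show ?thesis using e1 e2 by linarith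
  qed
  have "M \<le> lam * norm z + M / 2" using key[OF k0(1)] k0(2) by simp
  then have "M \<le> 2 * lam * norm z" by simp
  then show ?thesis using Mge[OF mn] by (simp add: S_def z_def)
qed

lemma span_range_rep:
  fixes x :: "nat \<Rightarrow> 'a::real_vector"
  assumes "v \<in> span (range x)"
  shows "\<exists>c N. (\<forall>i\<ge>N. c i = 0) \<and> v = (\<Sum>i<N. c i *\<^sub>R x i)"
  using assms
proof (induction rule: span_induct_alt)
  case base
  show ?case by (intro exI[of _ "\<lambda>_. 0"] exI[of _ 0]) simp
next
  case (step q u w)
  then obtain c N where cN: "\<forall>i\<ge>N. c i = 0" "w = (\<Sum>i<N. c i *\<^sub>R x i)" by blast
  from step obtain j where j: "u = x j" by blast
  define N' where "N' = max N (Suc j)"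
  define c' where "c' i = c i + (if i = j then q else 0)" for i
  have "(\<Sum>i<N'. c i *\<^sub>R x i) = (\<Sum>i<N. c i *\<^sub>R x i)"
    using cN(1) by (intro sum.mono_neutral_right) (auto simp: N'_def)
  moreover have "(\<Sum>i<N'. (if i = j then q else 0) *\<^sub>R x i) = q *\<^sub>R x j"
    by (subst sum.cong[OF refl, of _ _ "\<lambda>i. if i = j then q *\<^sub>R x j else 0"]) (auto simp: N'_def)
  ultimately have "(\<Sum>i<N'. c' i *\<^sub>R x i) = q *\<^sub>R u + w"
    by (simp add: c'_def scaleR_add_left sum.distrib j cN(2))
  moreover have "\<forall>i\<ge>N'. c' i = 0" using cN(1) by (auto simp: c'_def N'_def)
  ultimately show ?case by metis
qed

lemma sum_ext_zero:
  fixes x :: "nat \<Rightarrow> 'a::real_vector"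
  assumes "\<forall>i\<ge>N. c i = 0" "N \<le> M"
  shows "(\<Sum>i<M. c i *\<^sub>R x i) = (\<Sum>i<N. c i *\<^sub>R x i)"
  using assms by (intro sum.mono_neutral_right) auto

lemma sum_coef_diff:
  fixes x :: "nat \<Rightarrow> 'a::real_vector"
  shows "(\<Sum>i<n. (c i - d i) *\<^sub>R x i) = (\<Sum>i<n. c i *\<^sub>R x i) - (\<Sum>i<n. d i *\<^sub>R x i)"
  by (simp add: scaleR_diff_left sum_subtractf)

lemma grun_basic:
  fixes x :: "nat \<Rightarrow> 'a::real_normed_vector"
  assumes G: "\<And>c m n. m \<le> n \<Longrightarrow> norm (\<Sum>i<m. c i *\<^sub>R x i) \<le> K * norm (\<Sum>i<n. c i *\<^sub>R x i)"
    and ax: "\<And>i. a \<le> norm (x i)" and apos: "a > 0" and Kpos: "K > 0"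
  shows "basic_seq x"
proof -
  have coef: "\<bar>c i\<bar> * a \<le> 2 * K * norm (\<Sum>i<n. c i *\<^sub>R x i)" if "i < n" for c i n
  proof -
    have "\<bar>c i\<bar> * a \<le> \<bar>c i\<bar> * norm (x i)" using ax[of i] by (simp add: mult_left_mono)
    also have "\<dots> = norm ((\<Sum>k<Suc i. c k *\<^sub>R x k) - (\<Sum>k<i. c k *\<^sub>R x k))" by simp
    also have "\<dots> \<le> norm (\<Sum>k<Suc i. c k *\<^sub>R x k) + norm (\<Sum>k<i. c k *\<^sub>R x k)" by (rule norm_triangle_ineq4)
    also have "\<dots> \<le> K * norm (\<Sum>i<n. c i *\<^sub>R x i) + K * norm (\<Sum>i<n. c i *\<^sub>R x i)"
      using G[of "Suc i" n c] G[of i n c] that by simp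
    finally show ?thesis by simp
  qed
  show ?thesis unfolding basic_seq_def
  proof
    fix z assume z: "z \<in> closure (span (range x))"
    show "\<exists>!c. (\<lambda>N. \<Sum>i<N. c i *\<^sub>R x i) \<longlonglongrightarrow> z"
    proof (rule ex_ex1I)
      obtain w where w: "\<And>k. w k \<in> span (range x)" "w \<longlonglongrightarrow> z"
        using z closure_sequential by blast
      have "\<forall>k. \<exists>c N. (\<forall>i\<ge>N. c i = 0) \<and> w k = (\<Sum>i<N. c i *\<^sub>R x i)"
        using w(1) span_range_rep by blast
      then obtain cc NN where ccN: "\<And>k. \<forall>i\<ge>NN k. cc k i = 0" "\<And>k. w k = (\<Sum>i<NN k. cc k i *\<^sub>R x i)"
        by metis
      have wrep: "w k = (\<Sum>i<n. cc k i *\<^sub>R x i)" if "NN k \<le> n" for k n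
        using sum_ext_zero[OF ccN(1) that, of x] ccN(2) by simp
      have drep: "(\<Sum>i<n. (cc k i - cc l i) *\<^sub>R x i) = w k - w l"
        if "NN k \<le> n" "NN l \<le> n" for k l n
        using wrep[OF that(1)] wrep[OF that(2)] by (simp add: sum_coef_diff)
      have cdiff: "\<bar>cc k i - cc l i\<bar> * a \<le> 2 * K * norm (w k - w l)" for k l i
      proof -
        define n where "n = max (Suc i) (max (NN k) (NN l))"
        have "\<bar>cc k i - cc l i\<bar> * a \<le> 2 * K * norm (\<Sum>i<n. (cc k i - cc l i) *\<^sub>R x i)"
          by (rule coef[of i n "\<lambda>i. cc k i - cc l i"]) (simp add: n_def)
        also have "\<dots> = 2 * K * norm (w k - w l)" by (subst drep) (auto simp: n_def)
        finally show ?thesis .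
      qed
      have "Cauchy w" using w(2) by (rule LIMSEQ_imp_Cauchy)
      have "\<forall>i. \<exists>ci. (\<lambda>k. cc k i) \<longlonglongrightarrow> ci"
      proof
        fix i
        have "Cauchy (\<lambda>k. cc k i)"
        proof (rule CauchyI)
          fix e :: real assume "e > 0"
          then have "e * a / (2 * K) > 0" using apos Kpos by simp
          then obtain M where M: "\<forall>m\<ge>M. \<forall>n\<ge>M. norm (w m - w n) < e * a / (2 * K)"
            using CauchyD[OF \<open>Cauchy w\<close>] by blast
          show "\<exists>M. \<forall>m\<ge>M. \<forall>n\<ge>M. norm (cc m i - cc n i) < e"
          proof (intro exI allI impI)
            fix m n assume "m \<ge> M" "n \<ge> M"
            then have "2 * K * norm (w m - w n) < e * a" using M Kpos by (simp add: field_simps)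
            then have "\<bar>cc m i - cc n i\<bar> * a < e * a" using cdiff[where k=m and l=n and i=i] by linarith
            then show "norm (cc m i - cc n i) < e" using apos by simp
          qed
        qed
        then show "\<exists>ci. (\<lambda>k. cc k i) \<longlonglongrightarrow> ci" using Cauchy_convergent_iff convergent_def by blast
      qed
      then obtain c where c: "\<And>i. (\<lambda>k. cc k i) \<longlonglongrightarrow> c i" by metis
      have bnd: "norm ((\<Sum>i<M. c i *\<^sub>R x i) - (\<Sum>i<M. cc k i *\<^sub>R x i)) \<le> K * norm (z - w k)" for M k
      proof (rule tendsto_le[OF trivial_limit_sequentially])
        show "(\<lambda>l. K * norm (w l - w k)) \<longlonglongrightarrow> K * norm (z - w k)"
          by (intro tendsto_intros w(2))
        show "(\<lambda>l. norm ((\<Sum>i<M. cc l i *\<^sub>R x i) - (\<Sum>i<M. cc k i *\<^sub>R x i))) \<longlonglongrightarrow>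
                norm ((\<Sum>i<M. c i *\<^sub>R x i) - (\<Sum>i<M. cc k i *\<^sub>R x i))"
          by (intro tendsto_intros c)
        show "\<forall>\<^sub>F l in sequentially. norm ((\<Sum>i<M. cc l i *\<^sub>R x i) - (\<Sum>i<M. cc k i *\<^sub>R x i)) \<le> K * norm (w l - w k)"
        proof (intro always_eventually allI)
          fix l
          define n where "n = max M (max (NN l) (NN k))"
          have "norm ((\<Sum>i<M. cc l i *\<^sub>R x i) - (\<Sum>i<M. cc k i *\<^sub>R x i))
               = norm (\<Sum>i<M. (cc l i - cc k i) *\<^sub>R x i)" by (simp add: sum_coef_diff)
          also have "\<dots> \<le> K * norm (\<Sum>i<n. (cc l i - cc k i) *\<^sub>R x i)" by (rule G) (simp add: n_def)
          also have "\<dots> = K * norm (w l - w k)" by (subst drep) (auto simp: n_def)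
          finally show "norm ((\<Sum>i<M. cc l i *\<^sub>R x i) - (\<Sum>i<M. cc k i *\<^sub>R x i)) \<le> K * norm (w l - w k)" .
        qed
      qed
      show "\<exists>c. (\<lambda>N. \<Sum>i<N. c i *\<^sub>R x i) \<longlonglongrightarrow> z"
      proof (intro exI[of _ c] LIMSEQ_I)
        fix r :: real assume "r > 0"
        then have "r / (K + 1) > 0" using Kpos by simp
        then obtain k where k: "norm (w k - z) < r / (K + 1)"
          using LIMSEQ_D[OF w(2)] by blast
        show "\<exists>no. \<forall>M\<ge>no. norm ((\<Sum>i<M. c i *\<^sub>R x i) - z) < r"
        proof (intro exI[of _ "NN k"] allI impI)
          fix M assume "M \<ge> NN k"
          have "norm ((\<Sum>i<M. c i *\<^sub>R x i) - z) \<le>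
                norm ((\<Sum>i<M. c i *\<^sub>R x i) - (\<Sum>i<M. cc k i *\<^sub>R x i)) + norm (w k - z)"
            using wrep[OF \<open>M \<ge> NN k\<close>] norm_triangle_ineq[of "(\<Sum>i<M. c i *\<^sub>R x i) - w k" "w k - z"]
            by simp
          also have "\<dots> \<le> K * norm (z - w k) + norm (w k - z)" using bnd[of M k] by simp
          also have "\<dots> = (K + 1) * norm (w k - z)" by (simp add: norm_minus_commute algebra_simps)
          also have "\<dots> < r" using k Kpos by (simp add: field_simps)
          finally show "norm ((\<Sum>i<M. c i *\<^sub>R x i) - z) < r" .
        qed
      qed
    next
      fix c d
      assume c: "(\<lambda>N. \<Sum>i<N. c i *\<^sub>R x i) \<longlonglongrightarrow> z" and d: "(\<lambda>N. \<Sum>i<N. d i *\<^sub>R x i) \<longlonglongrightarrow> z"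
      have cd: "(\<lambda>N. \<Sum>i<N. (c i - d i) *\<^sub>R x i) \<longlonglongrightarrow> 0"
        using tendsto_diff[OF c d] by (simp add: sum_coef_diff)
      show "c = d"
      proof
        fix i
        have "\<bar>c i - d i\<bar> * a \<le> 0"
        proof (rule tendsto_le[OF trivial_limit_sequentially])
          have "(\<lambda>N. 2 * K * norm (\<Sum>i<N. (c i - d i) *\<^sub>R x i)) \<longlonglongrightarrow> 2 * K * norm (0::'a)"
            by (intro tendsto_intros cd)
          then show "(\<lambda>N. 2 * K * norm (\<Sum>i<N. (c i - d i) *\<^sub>R x i)) \<longlonglongrightarrow> 0" by simp
          show "(\<lambda>N. \<bar>c i - d i\<bar> * a) \<longlonglongrightarrow> \<bar>c i - d i\<bar> * a" by simp
          show "\<forall>\<^sub>F N in sequentially. \<bar>c i - d i\<bar> * a \<le> 2 * K * norm (\<Sum>i<N. (c i - d i) *\<^sub>R x i)"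
            using eventually_gt_at_top[of i]
            by eventually_elim (rule coef)
        qed
        then show "c i = d i" using apos by (simp add: mult_le_0_iff)
      qed
    qed
  qed
qed

lemma cov_choice:
  fixes R :: "nat \<Rightarrow> (nat \<Rightarrow> 'a) \<Rightarrow> 'a \<Rightarrow> bool"
  assumes "\<And>i h. \<exists>x. R i h x"
  shows "\<exists>f. \<forall>i. R i (\<lambda>j. if j < i then f j else undefined) (f i)"
proof -
  obtain r where r: "\<And>i h. R i h (r i h)" using assms by metis
  define pre where "pre = rec_nat (\<lambda>j. undefined) (\<lambda>i p. p(i := r i p))"
  define f where "f i = r i (pre i)" for i
  have p0: "pre 0 = (\<lambda>j. undefined)" by (simp add: pre_def)
  have ps: "pre (Suc i) = (pre i)(i := f i)" for i by (simp add: pre_def f_def)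
  have pre: "pre i = (\<lambda>j. if j < i then f j else undefined)" for i
  proof (induction i)
    case 0 then show ?case by (simp add: p0)
  next
    case (Suc i) then show ?case by (auto simp: ps fun_eq_iff less_Suc_eq)
  qed
  have "R i (pre i) (f i)" for i unfolding f_def by (rule r)
  then show ?thesis unfolding pre by blast
qed

lemma directed_ub:
  assumes ds: "directed_set D le" and "finite F" "F \<subseteq> D"
  shows "\<exists>c\<in>D. \<forall>a\<in>F. le a c"
  using assms(2,3)
proof (induction F rule: finite_induct)
  case empty
  have "D \<noteq> {}" using ds by (simp add: directed_set_def)
  then show ?case by auto
next
  case (insert b F)
  have "F \<subseteq> D" using insert.prems by simp
  then obtain c where c: "c \<in> D" "\<forall>a\<in>F. le a c" using insert.IH by blast
  have bD: "b \<in> D" and FD: "F \<subseteq> D" using insert.prems by auto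
  have ub: "\<forall>a\<in>D. \<forall>b\<in>D. \<exists>c\<in>D. le a c \<and> le b c"
    and tr: "\<forall>a\<in>D. \<forall>b\<in>D. \<forall>c\<in>D. le a b \<longrightarrow> le b c \<longrightarrow> le a c"
    using ds unfolding directed_set_def by blast+
  obtain c' where c': "c' \<in> D" "le b c'" "le c c'"
    using ub bD c(1) by blast
  have "\<forall>a\<in>F. le a c'"
  proof
    fix a assume "a \<in> F"
    then have "a \<in> D" "le a c" using FD c(2) by auto
    then show "le a c'" using tr c(1) c' by blast
  qed
  then show ?case using c' by auto
qed

lemma choose_beta:
  fixes P :: "'d \<Rightarrow> 'a::real_normed_vector \<Rightarrow> 'a"
  assumes ds: "directed_set D le" and conv: "\<forall>x. net_tendsto D le (\<lambda>a. P a x) x"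
    and "finite F" "F \<subseteq> D" "finite V" "e > 0"
  shows "\<exists>b\<in>D. (\<forall>a\<in>F. le a b) \<and> (\<forall>v\<in>V. norm (v - P b v) < e)"
proof -
  have "\<forall>v. \<exists>a0\<in>D. \<forall>a\<in>D. le a0 a \<longrightarrow> dist (P a v) v < e"
    using conv \<open>e > 0\<close> unfolding net_tendsto_def by blast
  then obtain g where g: "\<And>v. g v \<in> D" "\<And>v a. a \<in> D \<Longrightarrow> le (g v) a \<Longrightarrow> dist (P a v) v < e"
    by metis
  obtain c where c: "c \<in> D" "\<forall>a\<in>F \<union> g ` V. le a c"
    using directed_ub[OF ds, of "F \<union> g ` V"] assms g(1) by auto
  have "\<forall>v\<in>V. norm (v - P c v) < e"
    using g(2)[OF c(1)] c(2) by (simp add: dist_norm norm_minus_commute)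
  then show ?thesis using c by blast
qed

theorem lemma3p3:
  fixes P :: "'d \<Rightarrow> 'a::banach \<Rightarrow> 'a"
    and D :: "'d set" and le :: "'d \<Rightarrow> 'd \<Rightarrow> bool"
    and lam :: real and K :: "'a set" and y :: "nat \<Rightarrow> 'a"
  assumes "ext_approx_basis lam D le P"
    and "separable_set K"
    and "\<And>n. y n \<in> K"
    and "semi_normalized y"
    and "weakly_null y"
  shows "\<exists>\<beta> :: nat \<Rightarrow> 'd. \<exists>n :: nat \<Rightarrow> nat.
           (\<forall>i. \<beta> i \<in> D) \<and> (\<forall>i j. i \<le> j \<longrightarrow> le (\<beta> i) (\<beta> j)) \<and>
           strict_mono n \<and> basic_seq (\<lambda>i. y (n i)) \<and>
           (\<forall>N::nat. N \<ge> 1 \<longrightarrow>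
              (\<lambda>i. norm (P (\<beta> i) ((1 / real N) *\<^sub>R (\<Sum>k=1..N. y (n (i + k)))))) \<longlonglongrightarrow> 0) \<and>
           (\<lambda>i. norm (y (n i) - P (\<beta> i) (y (n i)))) \<longlonglongrightarrow> 0 \<and>
           (\<forall>x\<in>K. (\<lambda>i. norm (x - P (\<beta> i) x)) \<longlonglongrightarrow> 0)"
proof -
  from assms(1) have lam1: "lam \<ge> 1" and ds: "directed_set D le"
    and PD: "\<forall>a\<in>D. bounded_linear (P a) \<and> finite_rank (P a) \<and> onorm (P a) \<le> lam"
    and conv: "\<forall>x. net_tendsto D le (\<lambda>a. P a x) x"
    unfolding ext_approx_basis_def by auto
  obtain a where apos: "a > 0" and ay: "\<And>n. a \<le> norm (y n)"
    using assms(4) unfolding semi_normalized_def by blast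
  obtain C where C: "countable C" "C \<subseteq> K" "K \<subseteq> closure C"
    using assms(2) unfolding separable_set_def by blast
  have Cne: "C \<noteq> {}" using C(3) assms(3)[of 0] by auto
  define dd where "dd i = from_nat_into C i" for i
  define del where "del i = (a/4) / (2::real) ^ Suc i" for i
  have delpos: "del i > 0" for i using apos by (simp add: del_def)
  have delmono: "del p \<le> del i" if "i \<le> p" for i p
    unfolding del_def using apos that by (intro divide_left_mono power_increasing) auto
  have del0: "del \<longlonglongrightarrow> 0"
  proof -
    have eq: "(\<lambda>i. (a/8) * (1/2::real)^i) = del"
      by (auto simp: del_def fun_eq_iff power_one_over)
    show ?thesis unfolding eq[symmetric]
      by (intro tendsto_mult_right_zero LIMSEQ_realpow_zero) auto
  qed
  have Pz: "(\<lambda>n. P \<alpha> (y n)) \<longlonglongrightarrow> 0" if "\<alpha> \<in> D" for \<alpha>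
  proof -
    have "finite_rank (P \<alpha>)" and bl: "bounded_linear (P \<alpha>)" using PD that by auto
    then obtain B where B: "finite B" "range (P \<alpha>) \<subseteq> span B"
      unfolding finite_rank_def by blast
    have "bounded_linear (P \<alpha>) \<and> range (P \<alpha>) \<subseteq> span B \<longrightarrow> (\<lambda>n. P \<alpha> (y n)) \<longlonglongrightarrow> 0"
      using fin_rank_weak[OF B(1) assms(5)] by (rule spec)
    then show ?thesis using bl B(2) by blast
  qed
  define R where "R i h x = ((\<forall>j<i. snd (h j) \<in> D) \<longrightarrow>
      (snd x \<in> D \<and> (\<forall>j<i. fst (h j) < fst x) \<and> (\<forall>j<i. le (snd (h j)) (snd x)) \<and>
       (\<forall>j<i. norm (P (snd (h j)) (y (fst x))) < del i) \<and>
       (\<forall>j<i. norm (y (fst (h j)) - P (snd x) (y (fst (h j)))) < del i) \<and>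
       norm (y (fst x) - P (snd x) (y (fst x))) < del i \<and>
       (\<forall>j\<le>i. norm (dd j - P (snd x) (dd j)) < del i)))"
    for i and h :: "nat \<Rightarrow> nat \<times> 'd" and x :: "nat \<times> 'd"
  have exR: "\<exists>x. R i h x" for i h
  proof (cases "\<forall>j<i. snd (h j) \<in> D")
    case False then show ?thesis by (auto simp: R_def)
  next
    case True
    have "\<forall>j\<in>{..<i}. eventually (\<lambda>n. norm (P (snd (h j)) (y n)) < del i \<and> fst (h j) < n) sequentially"
    proof
      fix j assume "j \<in> {..<i}"
      then have "snd (h j) \<in> D" using True by simp
      then have "(\<lambda>n. norm (P (snd (h j)) (y n))) \<longlonglongrightarrow> 0" using Pz tendsto_norm_zero by blast
      then have "eventually (\<lambda>n. norm (P (snd (h j)) (y n)) < del i) sequentially"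
        using delpos by (rule order_tendstoD(2))
      moreover have "eventually (\<lambda>n. fst (h j) < n) sequentially" by (rule eventually_gt_at_top)
      ultimately show "eventually (\<lambda>n. norm (P (snd (h j)) (y n)) < del i \<and> fst (h j) < n) sequentially"
        by (rule eventually_conj)
    qed
    then have "eventually (\<lambda>n. \<forall>j\<in>{..<i}. norm (P (snd (h j)) (y n)) < del i \<and> fst (h j) < n) sequentially"
      by (intro eventually_ball_finite) auto
    then obtain n where n: "\<forall>j<i. norm (P (snd (h j)) (y n)) < del i \<and> fst (h j) < n"
      unfolding eventually_sequentially by auto
    obtain b where b: "b \<in> D" "\<forall>a\<in>(\<lambda>j. snd (h j)) ` {..<i}. le a b"
      "\<forall>v\<in>(\<lambda>j. y (fst (h j))) ` {..<i} \<union> {y n} \<union> dd ` {..i}. norm (v - P b v) < del i"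
      using choose_beta[OF ds conv, of "(\<lambda>j. snd (h j)) ` {..<i}"
          "(\<lambda>j. y (fst (h j))) ` {..<i} \<union> {y n} \<union> dd ` {..i}" "del i"] True delpos by auto
    have "R i h (n, b)" unfolding R_def using n b by auto
    then show ?thesis by blast
  qed
  obtain f where f: "\<And>i. R i (\<lambda>j. if j < i then f j else undefined) (f i)"
    using cov_choice[of R, OF exR] by blast
  define nn where "nn i = fst (f i)" for i
  define bb where "bb i = snd (f i)" for i
  have all: "bb i \<in> D \<and> (\<forall>j<i. nn j < nn i) \<and> (\<forall>j<i. le (bb j) (bb i)) \<and>
      (\<forall>j<i. norm (P (bb j) (y (nn i))) < del i) \<and>
      (\<forall>j<i. norm (y (nn j) - P (bb i) (y (nn j))) < del i) \<and>
      norm (y (nn i) - P (bb i) (y (nn i))) < del i \<and>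
      (\<forall>j\<le>i. norm (dd j - P (bb i) (dd j)) < del i)" for i
  proof (induction i rule: less_induct)
    case (less i)
    then have "\<forall>j<i. snd ((\<lambda>j. if j < i then f j else undefined) j) \<in> D" by (simp add: bb_def)
    then show ?case using f[of i] unfolding R_def nn_def bb_def by simp
  qed
  have bD: "bb i \<in> D" for i using all by blast
  have mono: "le (bb i) (bb j)" if "i \<le> j" for i j
  proof (cases "i = j")
    case True then show ?thesis using ds bD unfolding directed_set_def by blast
  next
    case False then show ?thesis using all[of j] that by simp
  qed
  have smono: "strict_mono nn" by (rule strict_monoI) (use all in blast)
  have F2: "norm (P (bb j) (y (nn i))) < del i" if "j < i" for i j using all[of i] that by blast
  have F3: "norm (y (nn j) - P (bb i) (y (nn j))) < del i" if "j \<le> i" for i j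
  proof (cases "j = i")
    case True then show ?thesis using all[of i] by blast
  next
    case False then show ?thesis using all[of i] that by simp
  qed
  have F4: "norm (dd j - P (bb i) (dd j)) < del i" if "j \<le> i" for i j using all[of i] that by blast
  have blQ: "bounded_linear (P (bb i))" for i using PD bD by blast
  have onQ: "onorm (P (bb i)) \<le> lam" for i using PD bD by blast
  have sq: "(\<lambda>i. norm (g i)) \<longlonglongrightarrow> 0" if "\<And>i. norm (g i) \<le> del i" for g :: "nat \<Rightarrow> 'a"
    by (rule tendsto_sandwich[of "\<lambda>_. 0" _ _ del]) (use that del0 in auto)
  have basic: "basic_seq (\<lambda>i. y (nn i))"
  proof (rule grun_basic[where K = "2 * lam" and a = a])
    fix c :: "nat \<Rightarrow> real" and m n :: nat assume "m \<le> n"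
    show "norm (\<Sum>i<m. c i *\<^sub>R y (nn i)) \<le> 2 * lam * norm (\<Sum>i<n. c i *\<^sub>R y (nn i))"
      by (rule grun[where Q = "\<lambda>i. P (bb i)" and a = a])
         (use blQ onQ ay apos F2 F3 \<open>m \<le> n\<close> in \<open>auto simp: del_def\<close>)
  qed (use ay apos lam1 in auto)
  have c1: "(\<lambda>i. norm (P (bb i) ((1 / real N) *\<^sub>R (\<Sum>k=1..N. y (nn (i + k)))))) \<longlonglongrightarrow> 0"
    if "N \<ge> 1" for N :: nat
  proof (rule sq)
    fix i
    interpret Q: bounded_linear "P (bb i)" by (rule blQ)
    have "norm (P (bb i) ((1 / real N) *\<^sub>R (\<Sum>k=1..N. y (nn (i + k)))))
        = (1 / real N) * norm (\<Sum>k=1..N. P (bb i) (y (nn (i + k))))"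
      by (simp add: Q.scaleR Q.sum)
    also have "\<dots> \<le> (1 / real N) * (\<Sum>k=1..N. norm (P (bb i) (y (nn (i + k)))))"
      by (intro mult_left_mono norm_sum) auto
    also have "\<dots> \<le> (1 / real N) * (\<Sum>k=1..N. del i)"
    proof (intro mult_left_mono sum_mono)
      fix k assume "k \<in> {1..N}"
      then have "norm (P (bb i) (y (nn (i + k)))) < del (i + k)" by (intro F2) auto
      then show "norm (P (bb i) (y (nn (i + k)))) \<le> del i" using delmono[of i "i + k"] by simp
    qed auto
    also have "\<dots> = del i" using that by simp
    finally show "norm (P (bb i) ((1 / real N) *\<^sub>R (\<Sum>k=1..N. y (nn (i + k))))) \<le> del i" .
  qed
  have c2: "(\<lambda>i. norm (y (nn i) - P (bb i) (y (nn i)))) \<longlonglongrightarrow> 0"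
    by (rule sq) (use F3 in \<open>auto intro: less_imp_le\<close>)
  have c3: "(\<lambda>i. norm (x - P (bb i) x)) \<longlonglongrightarrow> 0" if "x \<in> K" for x
  proof (rule LIMSEQ_I)
    fix r :: real assume "r > 0"
    then have r2: "r / (2 * (lam + 1)) > 0" using lam1 by simp
    have "x \<in> closure C" using that C(3) by blast
    then obtain c where c: "c \<in> C" "dist c x < r / (2 * (lam + 1))"
      using r2 closure_approachable by blast
    obtain j where j: "dd j = c" using from_nat_into_surj[OF C(1) c(1)] dd_def by blast
    obtain i0 where i0: "\<forall>i\<ge>i0. norm (del i - 0) < r / 2"
      using LIMSEQ_D[OF del0, of "r/2"] \<open>r > 0\<close> by auto
    show "\<exists>no. \<forall>i\<ge>no. norm (norm (x - P (bb i) x) - 0) < r"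
    proof (intro exI[of _ "max j i0"] allI impI)
      fix i assume i: "max j i0 \<le> i"
      interpret Q: bounded_linear "P (bb i)" by (rule blQ)
      have "x - P (bb i) x = (x - c) + (c - P (bb i) c) + P (bb i) (c - x)"
        by (simp add: Q.diff)
      then have "norm (x - P (bb i) x) \<le> norm (x - c) + norm (c - P (bb i) c) + norm (P (bb i) (c - x))"
        by (metis norm_triangle_ineq order_trans add_right_mono)
      also have "norm (P (bb i) (c - x)) \<le> lam * norm (c - x)"
        using onorm[OF blQ[of i], of "c - x"] onQ[of i] by (meson mult_right_mono norm_ge_zero order_trans)
      also have "norm (c - P (bb i) c) < del i" using F4[of j i] i j by simp
      also have "del i < r / 2"
      proof -
        have "i0 \<le> i" using i by simp
        then have "norm (del i - 0) < r / 2" using i0 by blast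
        then show ?thesis using delpos[of i] by simp
      qed
      finally have "norm (x - P (bb i) x) < (1 + lam) * norm (x - c) + r / 2"
        by (simp add: norm_minus_commute algebra_simps)
      also have "(1 + lam) * norm (x - c) \<le> (1 + lam) * (r / (2 * (lam + 1)))"
        using c(2) lam1 by (intro mult_left_mono) (auto simp: dist_norm norm_minus_commute)
      also have "(1 + lam) * (r / (2 * (lam + 1))) = r / 2" using lam1 by (simp add: field_simps)
      finally show "norm (norm (x - P (bb i) x) - 0) < r" by simp
    qed
  qed
  show ?thesis
    by (rule exI[of _ bb], rule exI[of _ nn]) (use bD mono smono basic c1 c2 c3 in blast)
qed

end
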